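(* Let $T=(V,E)$ be a tree rooted at $o$ with edge lengths $\ell:E\to\mathbb{R}_{>0}$. Let $X_1,X_2,X_3,X_4\subseteq V$ and $e\in E\cup V$. Then $\mathrm{mst}_e(X_1\cup X_2)\le \mathrm{mst}_e(X_1)+\mathrm{mst}_e(X_2)$, $\mathrm{mst}_e(X_2)+\mathrm{mst}_e(X_1\cup X_2\cup X_3)\le \mathrm{mst}_e(X_1\cup X_2)+\mathrm{mst}_e(X_2\cup X_3)$, and $\mathrm{mst}_e(X_1\cup X_2\cup X_3)+\mathrm{mst}_e(X_2\cup X_3\cup X_4)\le \mathrm{mst}_e(X_1\cup X_2)+\mathrm{mst}_e(X_2\cup X_3)+\mathrm{mst}_e(X_3\cup X_4)$.
   Context: For $v\in V$, $V_v$ is the set of descendants of $v$ in $T$ (including $v$); for an edge $e=(u,v)$ with $v$ the child, $V_e=V_v$. For $X\subseteq V$, $\mathrm{mst}(X)$ is the total length of the minimal subtree of $T$ containing $X\cup\{o\}$ (so $\mathrm{mst}(\emptyset)=0$), and for $e\in E\cup V$, $\mathrm{mst}_e(X)=\mathrm{mst}(V_e\cap X)$. *)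

theory Defs
  imports Complex_Main
begin

text \<open>A finite tree rooted at r (the root o) is given by its vertex set V and a parent map par
  (convention: par o = o, written with r).\<close>

definition rooted_tree :: "'a set \<Rightarrow> 'a \<Rightarrow> ('a \<Rightarrow> 'a) \<Rightarrow> bool" where
  "rooted_tree V r par \<longleftrightarrow> finite V \<and> r \<in> V \<and> par r = r \<and>
     (\<forall>v\<in>V. par v \<in> V) \<and> (\<forall>v\<in>V. \<exists>n. (par ^^ n) v = r)"

definition tree_edges :: "'a set \<Rightarrow> 'a \<Rightarrow> ('a \<Rightarrow> 'a) \<Rightarrow> ('a \<times> 'a) set" where
  "tree_edges V r par = {(par v, v) | v. v \<in> V \<and> v \<noteq> r}"

definition desc :: "'a set \<Rightarrow> ('a \<Rightarrow> 'a) \<Rightarrow> 'a \<Rightarrow> 'a set" where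
  "desc V par v = {w \<in> V. \<exists>n. (par ^^ n) w = v}"

fun desc_el :: "'a set \<Rightarrow> ('a \<Rightarrow> 'a) \<Rightarrow> ('a \<times> 'a) + 'a \<Rightarrow> 'a set" where
  "desc_el V par (Inl (u, v)) = desc V par v"
| "desc_el V par (Inr v) = desc V par v"

definition root_path_edges :: "'a \<Rightarrow> ('a \<Rightarrow> 'a) \<Rightarrow> 'a \<Rightarrow> ('a \<times> 'a) set" where
  "root_path_edges r par x = {(par w, w) | w. w \<noteq> r \<and> (\<exists>n. (par ^^ n) x = w)}"

text \<open>Edge set of the minimal subtree containing X \<union> {r}: the union of root paths.\<close>
definition mst_edges :: "'a \<Rightarrow> ('a \<Rightarrow> 'a) \<Rightarrow> 'a set \<Rightarrow> ('a \<times> 'a) set" where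
  "mst_edges r par X = (\<Union>x\<in>X. root_path_edges r par x)"

definition mst :: "'a \<Rightarrow> ('a \<Rightarrow> 'a) \<Rightarrow> ('a \<times> 'a \<Rightarrow> real) \<Rightarrow> 'a set \<Rightarrow> real" where
  "mst r par len X = sum len (mst_edges r par X)"

definition mst_at :: "'a set \<Rightarrow> 'a \<Rightarrow> ('a \<Rightarrow> 'a) \<Rightarrow> ('a \<times> 'a \<Rightarrow> real)
    \<Rightarrow> ('a \<times> 'a) + 'a \<Rightarrow> 'a set \<Rightarrow> real" where
  "mst_at V r par len e X = mst r par len (desc_el V par e \<inter> X)"

end

theory Submission
  imports Defs
begin

lemma iter_in: "\<forall>v\<in>V. par v \<in> V \<Longrightarrow> x \<in> V \<Longrightarrow> (par ^^ n) x \<in> V"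
  by (induction n) auto

lemma mst_edges_sub:
  assumes "rooted_tree V r par" "X \<subseteq> V"
  shows "mst_edges r par X \<subseteq> tree_edges V r par"
proof
  fix ed assume "ed \<in> mst_edges r par X"
  then obtain x w n where "x \<in> X" "ed = (par w, w)" "w \<noteq> r" "(par ^^ n) x = w"
    unfolding mst_edges_def root_path_edges_def by blast
  moreover have "w \<in> V" using iter_in[of V par x n] assms calculation
    unfolding rooted_tree_def by blast
  ultimately show "ed \<in> tree_edges V r par" unfolding tree_edges_def by blast
qed

lemma mst_edges_Un: "mst_edges r par (A \<union> B) = mst_edges r par A \<union> mst_edges r par B"
  unfolding mst_edges_def by blast

lemma sum_ind:
  assumes "finite T" "S \<subseteq> T"
  shows "sum len S = (\<Sum>x\<in>T. if x \<in> S then len x else 0)"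
  using assms by (simp add: sum.If_cases Int_absorb1 inf.absorb2)

lemma cover_ineqs:
  fixes len :: "'b \<Rightarrow> real"
  assumes T: "finite T" and nn: "\<forall>x\<in>T. len x \<ge> 0"
    and s: "A \<subseteq> T" "B \<subseteq> T" "C \<subseteq> T" "D \<subseteq> T"
  shows "sum len (A \<union> B) \<le> sum len A + sum len B"
    and "sum len B + sum len (A \<union> B \<union> C) \<le> sum len (A \<union> B) + sum len (B \<union> C)"
    and "sum len (A \<union> B \<union> C) + sum len (B \<union> C \<union> D)
          \<le> sum len (A \<union> B) + sum len (B \<union> C) + sum len (C \<union> D)"
proof -
  have u: "A \<union> B \<subseteq> T" "B \<union> C \<subseteq> T" "C \<union> D \<subseteq> T" "A \<union> B \<union> C \<subseteq> T" "B \<union> C \<union> D \<subseteq> T"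
    using s by auto
  note e = sum_ind[OF T, of _ len]
  show "sum len (A \<union> B) \<le> sum len A + sum len B"
    unfolding e[OF u(1)] e[OF s(1)] e[OF s(2)] sum.distrib[symmetric]
    by (rule sum_mono) (use nn in auto)
  show "sum len B + sum len (A \<union> B \<union> C) \<le> sum len (A \<union> B) + sum len (B \<union> C)"
    unfolding e[OF u(1)] e[OF s(2)] e[OF u(2)] e[OF u(4)] sum.distrib[symmetric]
    by (rule sum_mono) (use nn in auto)
  show "sum len (A \<union> B \<union> C) + sum len (B \<union> C \<union> D)
          \<le> sum len (A \<union> B) + sum len (B \<union> C) + sum len (C \<union> D)"
    unfolding e[OF u(1)] e[OF u(3)] e[OF u(2)] e[OF u(4)] e[OF u(5)] sum.distrib[symmetric]
    by (rule sum_mono) (use nn in auto)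
qed

theorem lemma3p1:
  fixes V :: "'a set" and r :: 'a and par :: "'a \<Rightarrow> 'a" and len :: "'a \<times> 'a \<Rightarrow> real"
    and X1 X2 X3 X4 :: "'a set" and e :: "('a \<times> 'a) + 'a"
  assumes "rooted_tree V r par"
    and "\<forall>ed\<in>tree_edges V r par. len ed > 0"
    and "X1 \<subseteq> V" "X2 \<subseteq> V" "X3 \<subseteq> V" "X4 \<subseteq> V"
    and "e \<in> Inl ` tree_edges V r par \<union> Inr ` V"
  shows "(mst_at V r par len e (X1 \<union> X2) \<le> mst_at V r par len e X1 + mst_at V r par len e X2) \<and>
         (mst_at V r par len e X2 + mst_at V r par len e (X1 \<union> X2 \<union> X3)
           \<le> mst_at V r par len e (X1 \<union> X2) + mst_at V r par len e (X2 \<union> X3)) \<and>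
         (mst_at V r par len e (X1 \<union> X2 \<union> X3) + mst_at V r par len e (X2 \<union> X3 \<union> X4)
           \<le> mst_at V r par len e (X1 \<union> X2) + mst_at V r par len e (X2 \<union> X3)
              + mst_at V r par len e (X3 \<union> X4))"
proof -
  let ?T = "tree_edges V r par"
  let ?D = "desc_el V par e"
  let ?M = "\<lambda>X. mst_edges r par (?D \<inter> X)"
  have fin: "finite ?T"
  proof -
    have "?T = (\<lambda>v. (par v, v)) ` (V - {r})" unfolding tree_edges_def by blast
    thus ?thesis using assms(1) unfolding rooted_tree_def by simp
  qed
  have nn: "\<forall>x\<in>?T. len x \<ge> 0" using assms(2) by (simp add: less_imp_le)
  have sub: "\<And>X. X \<subseteq> V \<Longrightarrow> ?M X \<subseteq> ?T"
    by (rule mst_edges_sub[OF assms(1)]) blast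
  have ma: "\<And>X. mst_at V r par len e X = sum len (?M X)"
    unfolding mst_at_def mst_def by simp
  have un: "\<And>A B. ?M (A \<union> B) = ?M A \<union> ?M B"
    by (simp add: Int_Un_distrib mst_edges_Un)
  note c = cover_ineqs[OF fin nn sub[OF assms(3)] sub[OF assms(4)] sub[OF assms(5)] sub[OF assms(6)]]
  show ?thesis unfolding ma un using c by simp
qed

end
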